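(* Let $L$ be a geometric lattice of rank $r+1$ with $n$ atoms. Then for all $S\subseteq[r]$, $f_S(L)\le f_S(\mathscr{B}_{r+1,n})$.
   Context: A geometric lattice is a finite graded atomic lattice whose rank function $\rho$ satisfies $\rho(x\vee y)+\rho(x\wedge y)\le \rho(x)+\rho(y)$. For a graded poset $P$ of rank $r+1$ with $\hat 0,\hat 1$ and $S\subseteq[r]=\{1,\dots,r\}$, $f_S(P)$ is the number of chains in $P$ whose elements have ranks exactly the elements of $S$. The truncated Boolean algebra $\mathscr{B}_{r+1,n}$ ($n\ge r+1$) is the poset of all subsets of $[n]$ of cardinality at most $r$, ordered by inclusion, together with an added maximum element $\hat 1$. *)

theory Defs
  imports Main
begin

definition lt_on :: "('a \<Rightarrow> 'a \<Rightarrow> bool) \<Rightarrow> 'a \<Rightarrow> 'a \<Rightarrow> bool" where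
  "lt_on le x y \<longleftrightarrow> le x y \<and> x \<noteq> y"

definition partial_order_on_set :: "'a set \<Rightarrow> ('a \<Rightarrow> 'a \<Rightarrow> bool) \<Rightarrow> bool" where
  "partial_order_on_set P le \<longleftrightarrow>
     (\<forall>x\<in>P. le x x) \<and>
     (\<forall>x\<in>P. \<forall>y\<in>P. le x y \<and> le y x \<longrightarrow> x = y) \<and>
     (\<forall>x\<in>P. \<forall>y\<in>P. \<forall>z\<in>P. le x y \<and> le y z \<longrightarrow> le x z)"

definition is_lub :: "'a set \<Rightarrow> ('a \<Rightarrow> 'a \<Rightarrow> bool) \<Rightarrow> 'a set \<Rightarrow> 'a \<Rightarrow> bool" where
  "is_lub P le A z \<longleftrightarrow> z \<in> P \<and> (\<forall>a\<in>A. le a z) \<and> (\<forall>w\<in>P. (\<forall>a\<in>A. le a w) \<longrightarrow> le z w)"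

definition is_glb :: "'a set \<Rightarrow> ('a \<Rightarrow> 'a \<Rightarrow> bool) \<Rightarrow> 'a set \<Rightarrow> 'a \<Rightarrow> bool" where
  "is_glb P le A z \<longleftrightarrow> z \<in> P \<and> (\<forall>a\<in>A. le z a) \<and> (\<forall>w\<in>P. (\<forall>a\<in>A. le w a) \<longrightarrow> le w z)"

definition join_on :: "'a set \<Rightarrow> ('a \<Rightarrow> 'a \<Rightarrow> bool) \<Rightarrow> 'a \<Rightarrow> 'a \<Rightarrow> 'a" where
  "join_on P le x y = (THE z. is_lub P le {x, y} z)"

definition meet_on :: "'a set \<Rightarrow> ('a \<Rightarrow> 'a \<Rightarrow> bool) \<Rightarrow> 'a \<Rightarrow> 'a \<Rightarrow> 'a" where
  "meet_on P le x y = (THE z. is_glb P le {x, y} z)"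

definition finite_lattice_on :: "'a set \<Rightarrow> ('a \<Rightarrow> 'a \<Rightarrow> bool) \<Rightarrow> bool" where
  "finite_lattice_on P le \<longleftrightarrow> finite P \<and> P \<noteq> {} \<and> partial_order_on_set P le \<and>
     (\<forall>x\<in>P. \<forall>y\<in>P. (\<exists>z. is_lub P le {x, y} z) \<and> (\<exists>z. is_glb P le {x, y} z))"

definition is_bot :: "'a set \<Rightarrow> ('a \<Rightarrow> 'a \<Rightarrow> bool) \<Rightarrow> 'a \<Rightarrow> bool" where
  "is_bot P le b \<longleftrightarrow> b \<in> P \<and> (\<forall>x\<in>P. le b x)"

definition is_top :: "'a set \<Rightarrow> ('a \<Rightarrow> 'a \<Rightarrow> bool) \<Rightarrow> 'a \<Rightarrow> bool" where
  "is_top P le t \<longleftrightarrow> t \<in> P \<and> (\<forall>x\<in>P. le x t)"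

definition covers :: "'a set \<Rightarrow> ('a \<Rightarrow> 'a \<Rightarrow> bool) \<Rightarrow> 'a \<Rightarrow> 'a \<Rightarrow> bool" where
  "covers P le x y \<longleftrightarrow> x \<in> P \<and> y \<in> P \<and> lt_on le x y \<and>
     \<not> (\<exists>z\<in>P. lt_on le x z \<and> lt_on le z y)"

definition atoms_of :: "'a set \<Rightarrow> ('a \<Rightarrow> 'a \<Rightarrow> bool) \<Rightarrow> 'a set" where
  "atoms_of P le = {a \<in> P. \<exists>b. is_bot P le b \<and> covers P le b a}"

definition graded_rank :: "'a set \<Rightarrow> ('a \<Rightarrow> 'a \<Rightarrow> bool) \<Rightarrow> ('a \<Rightarrow> nat) \<Rightarrow> bool" where
  "graded_rank P le \<rho> \<longleftrightarrow>
     (\<exists>b. is_bot P le b \<and> \<rho> b = 0) \<and>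
     (\<forall>x\<in>P. \<forall>y\<in>P. covers P le x y \<longrightarrow> \<rho> y = \<rho> x + 1)"

definition atomic_on :: "'a set \<Rightarrow> ('a \<Rightarrow> 'a \<Rightarrow> bool) \<Rightarrow> bool" where
  "atomic_on P le \<longleftrightarrow> (\<forall>x\<in>P. is_lub P le {a \<in> atoms_of P le. le a x} x)"

definition geometric_lattice :: "'a set \<Rightarrow> ('a \<Rightarrow> 'a \<Rightarrow> bool) \<Rightarrow> ('a \<Rightarrow> nat) \<Rightarrow> bool" where
  "geometric_lattice P le \<rho> \<longleftrightarrow> finite_lattice_on P le \<and> graded_rank P le \<rho> \<and> atomic_on P le \<and>
     (\<forall>x\<in>P. \<forall>y\<in>P. \<rho> (join_on P le x y) + \<rho> (meet_on P le x y) \<le> \<rho> x + \<rho> y)"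

definition chain_on :: "('a \<Rightarrow> 'a \<Rightarrow> bool) \<Rightarrow> 'a set \<Rightarrow> bool" where
  "chain_on le C \<longleftrightarrow> (\<forall>x\<in>C. \<forall>y\<in>C. le x y \<or> le y x)"

definition flag_f :: "'a set \<Rightarrow> ('a \<Rightarrow> 'a \<Rightarrow> bool) \<Rightarrow> ('a \<Rightarrow> nat) \<Rightarrow> nat set \<Rightarrow> nat" where
  "flag_f P le \<rho> S = card {C. C \<subseteq> P \<and> chain_on le C \<and> \<rho> ` C = S}"

text \<open>Truncated Boolean algebra B_{r+1,n}: subsets of [n] of size at most r
  (encoded as Some A), plus a top element (encoded as None).\<close>
definition trunc_bool_carrier :: "nat \<Rightarrow> nat \<Rightarrow> nat set option set" where
  "trunc_bool_carrier r n = insert None (Some ` {A. A \<subseteq> {1..n} \<and> card A \<le> r})"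

fun trunc_bool_le :: "nat set option \<Rightarrow> nat set option \<Rightarrow> bool" where
  "trunc_bool_le _ None = True"
| "trunc_bool_le None (Some _) = False"
| "trunc_bool_le (Some A) (Some B) = (A \<subseteq> B)"

fun trunc_bool_rank :: "nat \<Rightarrow> nat set option \<Rightarrow> nat" where
  "trunc_bool_rank r None = r + 1"
| "trunc_bool_rank r (Some A) = card A"

end

theory Submission
  imports Defs
begin
locale geo =
  fixes L :: "'a set" and le :: "'a \<Rightarrow> 'a \<Rightarrow> bool" and \<rho> :: "'a \<Rightarrow> nat"
  assumes geom: "geometric_lattice L le \<rho>"
begin

lemma FL: "finite_lattice_on L le" and GR: "graded_rank L le \<rho>" and AT: "atomic_on L le"
  and submod: "\<And>x y. x \<in> L \<Longrightarrow> y \<in> L \<Longrightarrow> \<rho> (join_on L le x y) + \<rho> (meet_on L le x y) \<le> \<rho> x + \<rho> y"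
  using geom unfolding geometric_lattice_def by blast+

lemma finL: "finite L"
  using FL unfolding finite_lattice_on_def by blast

lemma PO: "partial_order_on_set L le"
  using FL unfolding finite_lattice_on_def by blast

lemma reflL: "x \<in> L \<Longrightarrow> le x x"
  using PO unfolding partial_order_on_set_def by blast

lemma antisym: "x \<in> L \<Longrightarrow> y \<in> L \<Longrightarrow> le x y \<Longrightarrow> le y x \<Longrightarrow> x = y"
  using PO unfolding partial_order_on_set_def by blast

lemma trans: "x \<in> L \<Longrightarrow> y \<in> L \<Longrightarrow> z \<in> L \<Longrightarrow> le x y \<Longrightarrow> le y z \<Longrightarrow> le x z"
  using PO unfolding partial_order_on_set_def by blast

lemma lub_ex: "x \<in> L \<Longrightarrow> y \<in> L \<Longrightarrow> \<exists>z. is_lub L le {x, y} z"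
  using FL unfolding finite_lattice_on_def by blast

lemma glb_ex: "x \<in> L \<Longrightarrow> y \<in> L \<Longrightarrow> \<exists>z. is_glb L le {x, y} z"
  using FL unfolding finite_lattice_on_def by blast

lemma bot0: obtains b where "is_bot L le b" "\<rho> b = 0"
  using GR unfolding graded_rank_def by blast

lemma cover_rank: "covers L le x y \<Longrightarrow> \<rho> y = \<rho> x + 1"
  using GR unfolding graded_rank_def covers_def by blast

lemma atomic: "x \<in> L \<Longrightarrow> is_lub L le {a \<in> atoms_of L le. le a x} x"
  using AT unfolding atomic_on_def by blast

lemma lub_unique: "is_lub L le A z1 \<Longrightarrow> is_lub L le A z2 \<Longrightarrow> z1 = z2"
  unfolding is_lub_def using antisym[of z1 z2] by auto

lemma glb_unique: "is_glb L le A z1 \<Longrightarrow> is_glb L le A z2 \<Longrightarrow> z1 = z2"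
  unfolding is_glb_def using antisym[of z1 z2] by auto

lemma bot_unique: "is_bot L le b1 \<Longrightarrow> is_bot L le b2 \<Longrightarrow> b1 = b2"
  unfolding is_bot_def using antisym[of b1 b2] by auto

lemma atoms_sub: "atoms_of L le \<subseteq> L"
  unfolding atoms_of_def by auto

lemma rank_strict_aux:
  "card {u\<in>L. lt_on le x u \<and> le u z} = k \<Longrightarrow> x \<in> L \<Longrightarrow> z \<in> L \<Longrightarrow> lt_on le x z \<Longrightarrow> \<rho> x < \<rho> z"
proof (induction k arbitrary: x z rule: less_induct)
  case (less k)
  show ?case
  proof (cases "covers L le x z")
    case True then show ?thesis using cover_rank by simp
  next
    case False
    then obtain u where u: "u\<in>L" "lt_on le x u" "lt_on le u z"
      using less.prems unfolding covers_def by auto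
    have s1: "{v\<in>L. lt_on le x v \<and> le v u} \<subset> {v\<in>L. lt_on le x v \<and> le v z}"
    proof
      show "{v\<in>L. lt_on le x v \<and> le v u} \<subseteq> {v\<in>L. lt_on le x v \<and> le v z}"
      proof (rule subsetI)
        fix v assume "v \<in> {v\<in>L. lt_on le x v \<and> le v u}"
        then show "v \<in> {v\<in>L. lt_on le x v \<and> le v z}"
          using u less.prems trans[of v u z] unfolding lt_on_def by auto
      qed
      have "z \<notin> {v\<in>L. lt_on le x v \<and> le v u}"
        using u less.prems antisym[of z u] unfolding lt_on_def by auto
      moreover have "z \<in> {v\<in>L. lt_on le x v \<and> le v z}"
        using less.prems reflL by auto
      ultimately show "{v\<in>L. lt_on le x v \<and> le v u} \<noteq> {v\<in>L. lt_on le x v \<and> le v z}" by blast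
    qed
    have s2: "{v\<in>L. lt_on le u v \<and> le v z} \<subset> {v\<in>L. lt_on le x v \<and> le v z}"
    proof
      show "{v\<in>L. lt_on le u v \<and> le v z} \<subseteq> {v\<in>L. lt_on le x v \<and> le v z}"
      proof (rule subsetI)
        fix v assume v: "v \<in> {v\<in>L. lt_on le u v \<and> le v z}"
        then have "le x v" using u less.prems trans[of x u v] unfolding lt_on_def by auto
        moreover have "x \<noteq> v" using v u less.prems antisym[of u x] unfolding lt_on_def by auto
        ultimately show "v \<in> {v\<in>L. lt_on le x v \<and> le v z}"
          using v unfolding lt_on_def by auto
      qed
      have "u \<notin> {v\<in>L. lt_on le u v \<and> le v z}"
        unfolding lt_on_def by auto
      moreover have "u \<in> {v\<in>L. lt_on le x v \<and> le v z}"
        using u unfolding lt_on_def by auto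
      ultimately show "{v\<in>L. lt_on le u v \<and> le v z} \<noteq> {v\<in>L. lt_on le x v \<and> le v z}" by blast
    qed
    have f: "finite {v\<in>L. lt_on le x v \<and> le v z}" using finL by auto
    have "\<rho> x < \<rho> u"
      using less.IH[OF _ HOL.refl, of x u] psubset_card_mono[OF f s1] less.prems u by auto
    moreover have "\<rho> u < \<rho> z"
      using less.IH[OF _ HOL.refl, of u z] psubset_card_mono[OF f s2] less.prems u by auto
    ultimately show ?thesis by simp
  qed
qed

lemma rank_strict: "x \<in> L \<Longrightarrow> z \<in> L \<Longrightarrow> lt_on le x z \<Longrightarrow> \<rho> x < \<rho> z"
  by (rule rank_strict_aux[OF HOL.refl])

lemma rank_mono: "x \<in> L \<Longrightarrow> z \<in> L \<Longrightarrow> le x z \<Longrightarrow> \<rho> x \<le> \<rho> z"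
  using rank_strict[of x z] unfolding lt_on_def by (cases "x = z") auto

lemma bot_lub_empty: "is_bot L le b \<Longrightarrow> is_lub L le {} b"
  unfolding is_bot_def is_lub_def by auto

lemma atom_rank: assumes "a \<in> atoms_of L le" shows "\<rho> a = 1"
proof -
  obtain b where b: "is_bot L le b" "covers L le b a" using assms unfolding atoms_of_def by blast
  obtain b0 where "is_bot L le b0" "\<rho> b0 = 0" by (rule bot0)
  then have "\<rho> b = 0" using b bot_unique by metis
  then show ?thesis using cover_rank[OF b(2)] by simp
qed

lemma extend_aux:
  "\<rho> y - card A = d \<Longrightarrow> x \<in> L \<Longrightarrow> y \<in> L \<Longrightarrow> le x y \<Longrightarrow> finite A \<Longrightarrow> A \<subseteq> atoms_of L le
   \<Longrightarrow> card A = \<rho> x \<Longrightarrow> is_lub L le A x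
   \<Longrightarrow> \<exists>B. A \<subseteq> B \<and> B \<subseteq> atoms_of L le \<and> finite B \<and> card B = \<rho> y \<and> is_lub L le B y"
proof (induction d arbitrary: A x rule: less_induct)
  case (less d)
  show ?case
  proof (cases "x = y")
    case True then show ?thesis using less.prems by blast
  next
    case False
    have ltxy: "lt_on le x y" using False less.prems unfolding lt_on_def by auto
    have rxy: "\<rho> x < \<rho> y" using rank_strict[OF _ _ ltxy] less.prems by auto
    have "\<exists>a. a \<in> atoms_of L le \<and> le a y \<and> \<not> le a x"
    proof (rule ccontr)
      assume "\<not> ?thesis"
      then have AllA: "\<forall>a\<in>{a \<in> atoms_of L le. le a y}. le a x" by auto
      have "is_lub L le {a \<in> atoms_of L le. le a y} y" using atomic[of y] less.prems(3) by blast
      then have H: "\<forall>w\<in>L. (\<forall>a\<in>{a \<in> atoms_of L le. le a y}. le a w) \<longrightarrow> le y w"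
        unfolding is_lub_def by blast
      have "le y x" using H less.prems(2) AllA by (meson)
      then show False using antisym[of x y] less.prems False by auto
    qed
    then obtain a where a: "a \<in> atoms_of L le" "le a y" "\<not> le a x" by blast
    have aL: "a \<in> L" using a atoms_sub by auto
    obtain z where z: "is_lub L le {x, a} z" using lub_ex[of x a] less.prems aL by auto
    have zL: "z \<in> L" using z unfolding is_lub_def by auto
    have xz: "le x z" and az: "le a z" using z unfolding is_lub_def by auto
    have zy: "le z y" using z less.prems a unfolding is_lub_def by auto
    have zA: "is_lub L le (insert a A) z"
    proof -
      have "\<forall>w\<in>A. le w z"
      proof
        fix w assume w: "w \<in> A"
        then have "le w x" "w \<in> L" using less.prems(6,8) atoms_sub unfolding is_lub_def by auto
        then show "le w z" using trans[of w x z] xz zL less.prems(2) by simp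
      qed
      moreover have "\<forall>w\<in>L. (\<forall>v\<in>insert a A. le v w) \<longrightarrow> le z w"
        using less.prems z unfolding is_lub_def by auto
      ultimately show ?thesis using zL az unfolding is_lub_def by auto
    qed
    have join: "join_on L le x a = z"
      unfolding join_on_def using z lub_unique by blast
    obtain m where m: "is_glb L le {x, a} m" using glb_ex[of x a] less.prems aL by auto
    have meet: "meet_on L le x a = m"
      unfolding meet_on_def using m glb_unique by blast
    have rm: "\<rho> m = 0"
    proof -
      obtain b where b: "is_bot L le b" "covers L le b a" using a unfolding atoms_of_def by blast
      have mL: "m \<in> L" and ma: "le m a" and mx: "le m x" using m unfolding is_glb_def by auto
      have bm: "le b m" using b mL unfolding is_bot_def by auto
      have "m = b"
      proof (rule ccontr)
        assume mb: "m \<noteq> b"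
        show False
        proof (cases "m = a")
          case True then show False using mx a by simp
        next
          case False
          then show False using b(2) mb bm ma mL unfolding covers_def lt_on_def by auto
        qed
      qed
      obtain b0 where "is_bot L le b0" "\<rho> b0 = 0" by (rule bot0)
      then show ?thesis using b \<open>m = b\<close> bot_unique by metis
    qed
    have "\<rho> z \<le> \<rho> x + 1"
      using submod[of x a] less.prems aL join meet rm atom_rank[OF a(1)] by simp
    moreover have "\<rho> x < \<rho> z"
    proof -
      have "x \<noteq> z" using az a by auto
      then show ?thesis using rank_strict[of x z] less.prems zL xz unfolding lt_on_def by auto
    qed
    ultimately have rz: "\<rho> z = \<rho> x + 1" by simp
    have aA: "a \<notin> A" using less.prems a unfolding is_lub_def by auto
    have cA: "card (insert a A) = \<rho> z" using aA less.prems rz by simp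
    have "\<rho> z \<le> \<rho> y" using rank_mono[OF zL _ zy] less.prems by auto
    have "\<rho> y - card (insert a A) < d" using cA rz rxy less.prems by simp
    from less.IH[OF this HOL.refl zL less(4) zy _ _ cA zA]
    obtain B where "insert a A \<subseteq> B \<and> B \<subseteq> atoms_of L le \<and> finite B \<and> card B = \<rho> y \<and> is_lub L le B y"
      using less.prems a by auto
    then show ?thesis by blast
  qed
qed

lemma extend:
  "x \<in> L \<Longrightarrow> y \<in> L \<Longrightarrow> le x y \<Longrightarrow> finite A \<Longrightarrow> A \<subseteq> atoms_of L le
   \<Longrightarrow> card A = \<rho> x \<Longrightarrow> is_lub L le A x
   \<Longrightarrow> \<exists>B. A \<subseteq> B \<and> B \<subseteq> atoms_of L le \<and> finite B \<and> card B = \<rho> y \<and> is_lub L le B y"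
  by (rule extend_aux[OF HOL.refl])

lemma chain_sub: "chain_on le C \<Longrightarrow> D \<subseteq> C \<Longrightarrow> chain_on le D"
  unfolding chain_on_def by blast

lemma chain_max: "finite C \<Longrightarrow> C \<noteq> {} \<Longrightarrow> C \<subseteq> L \<Longrightarrow> chain_on le C \<Longrightarrow> \<exists>m\<in>C. \<forall>x\<in>C. le x m"
proof (induction C rule: finite_ne_induct)
  case (singleton a)
  then show ?case using reflL by auto
next
  case (insert a C)
  then obtain m where m: "m \<in> C" "\<forall>x\<in>C. le x m" using chain_sub[of "insert a C" C] by auto
  have aL: "a \<in> L" and mL: "m \<in> L" using insert.prems m by auto
  have "le a m \<or> le m a" using insert.prems m unfolding chain_on_def by auto
  then show ?case
  proof
    assume "le a m" then show ?thesis using m by auto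
  next
    assume ma: "le m a"
    have "\<forall>x\<in>insert a C. le x a"
    proof
      fix x assume "x \<in> insert a C"
      then show "le x a"
      proof
        assume "x = a" then show ?thesis using reflL aL by simp
      next
        assume xC: "x \<in> C"
        then have "x \<in> L" "le x m" using insert.prems m by auto
        then show ?thesis using trans[of x m a] mL aL ma by simp
      qed
    qed
    then show ?thesis by auto
  qed
qed

lemma family_aux:
  "card C = k \<Longrightarrow> finite C \<Longrightarrow> C \<subseteq> L \<Longrightarrow> chain_on le C \<Longrightarrow>
   \<exists>F. (\<forall>x\<in>C. F x \<subseteq> atoms_of L le \<and> finite (F x) \<and> card (F x) = \<rho> x \<and> is_lub L le (F x) x)
     \<and> (\<forall>x\<in>C. \<forall>y\<in>C. le x y \<longrightarrow> F x \<subseteq> F y)"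
proof (induction k arbitrary: C rule: less_induct)
  case (less k)
  show ?case
  proof (cases "C = {}")
    case True then show ?thesis by auto
  next
    case False
    obtain m where m: "m \<in> C" "\<forall>x\<in>C. le x m" using chain_max[OF less.prems(2) False less.prems(3,4)] by blast
    define C' where "C' = C - {m}"
    have cC': "card C' < k" using m less.prems unfolding C'_def
      using card_gt_0_iff[of C] by auto
    have C'p: "finite C'" "C' \<subseteq> L" "chain_on le C'" using less.prems chain_sub[of C C'] unfolding C'_def by auto
    obtain F' where F': "\<forall>x\<in>C'. F' x \<subseteq> atoms_of L le \<and> finite (F' x) \<and> card (F' x) = \<rho> x \<and> is_lub L le (F' x) x"
      "\<forall>x\<in>C'. \<forall>y\<in>C'. le x y \<longrightarrow> F' x \<subseteq> F' y"
      using less.IH[OF cC' HOL.refl C'p] by blast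
    have mL: "m \<in> L" using m less.prems by auto
    have "\<exists>x0 A0. x0 \<in> L \<and> le x0 m \<and> finite A0 \<and> A0 \<subseteq> atoms_of L le \<and> card A0 = \<rho> x0
            \<and> is_lub L le A0 x0 \<and> (\<forall>x\<in>C'. F' x \<subseteq> A0)"
    proof (cases "C' = {}")
      case True
      obtain b where b: "is_bot L le b" "\<rho> b = 0" by (rule bot0)
      then have "b \<in> L \<and> le b m \<and> finite {} \<and> {} \<subseteq> atoms_of L le \<and> card {} = \<rho> b
            \<and> is_lub L le {} b \<and> (\<forall>x\<in>C'. F' x \<subseteq> {})"
        using True mL bot_lub_empty[OF b(1)] unfolding is_bot_def by auto
      then show ?thesis by blast
    next
      case False
      have "finite C'" "C' \<subseteq> L" "chain_on le C'" using less.prems chain_sub[of C C'] unfolding C'_def by auto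
      then obtain m' where m': "m' \<in> C'" "\<forall>x\<in>C'. le x m'" using chain_max False by blast
      have "m' \<in> L \<and> le m' m \<and> finite (F' m') \<and> F' m' \<subseteq> atoms_of L le \<and> card (F' m') = \<rho> m'
            \<and> is_lub L le (F' m') m' \<and> (\<forall>x\<in>C'. F' x \<subseteq> F' m')"
        using m' F' m less.prems unfolding C'_def by auto
      then show ?thesis by blast
    qed
    then obtain x0 A0 where x0: "x0 \<in> L" "le x0 m" "finite A0" "A0 \<subseteq> atoms_of L le" "card A0 = \<rho> x0"
            "is_lub L le A0 x0" "\<forall>x\<in>C'. F' x \<subseteq> A0" by blast
    obtain B where B: "A0 \<subseteq> B" "B \<subseteq> atoms_of L le" "finite B" "card B = \<rho> m" "is_lub L le B m"
      using extend[OF x0(1) mL x0(2) x0(3) x0(4) x0(5) x0(6)] by blast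
    define F where "F = F'(m := B)"
    have "\<forall>x\<in>C. F x \<subseteq> atoms_of L le \<and> finite (F x) \<and> card (F x) = \<rho> x \<and> is_lub L le (F x) x"
      using F' B unfolding F_def C'_def by auto
    moreover have "\<forall>x\<in>C. \<forall>y\<in>C. le x y \<longrightarrow> F x \<subseteq> F y"
    proof (intro ballI impI)
      fix x y assume xy: "x \<in> C" "y \<in> C" "le x y"
      show "F x \<subseteq> F y"
      proof (cases "y = m")
        case True
        then show ?thesis
        proof (cases "x = m")
          case False
          then have "x \<in> C'" using xy unfolding C'_def by auto
          then show ?thesis using x0(7) B(1) True False unfolding F_def by auto
        qed (simp)
      next
        case ym: False
        have "x \<noteq> m"
        proof
          assume "x = m"
          then have "le m y" "le y m" using xy m by auto
          then show False using antisym[of m y] ym mL xy less.prems by auto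
        qed
        then have "x \<in> C'" "y \<in> C'" using xy ym unfolding C'_def by auto
        then show ?thesis using F' xy ym \<open>x \<noteq> m\<close> unfolding F_def by auto
      qed
    qed
    ultimately show ?thesis by blast
  qed
qed

lemma family:
  "finite C \<Longrightarrow> C \<subseteq> L \<Longrightarrow> chain_on le C \<Longrightarrow>
   \<exists>F. (\<forall>x\<in>C. F x \<subseteq> atoms_of L le \<and> finite (F x) \<and> card (F x) = \<rho> x \<and> is_lub L le (F x) x)
     \<and> (\<forall>x\<in>C. \<forall>y\<in>C. le x y \<longrightarrow> F x \<subseteq> F y)"
  by (rule family_aux[OF HOL.refl])

end

lemma trunc_carrier_finite: "finite (trunc_bool_carrier r n)"
proof -
  have "{A. A \<subseteq> {1..n} \<and> card A \<le> r} \<subseteq> Pow {1..n}" by auto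
  then have "finite {A. A \<subseteq> {1..n} \<and> card A \<le> r}" using finite_subset by blast
  then show ?thesis unfolding trunc_bool_carrier_def by simp
qed

theorem corollary3p3:
  fixes L :: "'a set" and le :: "'a \<Rightarrow> 'a \<Rightarrow> bool" and \<rho> :: "'a \<Rightarrow> nat"
    and r n :: nat and S :: "nat set"
  assumes "geometric_lattice L le \<rho>"
    and "\<exists>t. is_top L le t \<and> \<rho> t = r + 1"
    and "card (atoms_of L le) = n"
    and "S \<subseteq> {1..r}"
  shows "flag_f L le \<rho> S
           \<le> flag_f (trunc_bool_carrier r n) trunc_bool_le (trunc_bool_rank r) S"
proof -
  interpret geo L le \<rho> by (rule geo.intro) (rule assms(1))
  have finA: "finite (atoms_of L le)" using finL atoms_sub finite_subset by blast
  obtain \<phi> where phi: "bij_betw \<phi> (atoms_of L le) {1..n}"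
    using finite_same_card_bij[OF finA, of "{1..n}"] assms(3) by auto
  have injphi: "inj_on \<phi> (atoms_of L le)" using phi bij_betw_imp_inj_on by blast
  have imphi: "\<phi> ` atoms_of L le = {1..n}" using phi bij_betw_imp_surj_on by blast
  define \<psi> where "\<psi> = inv_into (atoms_of L le) \<phi>"
  define BC where "BC = {D. D \<subseteq> trunc_bool_carrier r n \<and> chain_on trunc_bool_le D \<and> trunc_bool_rank r ` D = S}"
  define LC where "LC = {C. C \<subseteq> L \<and> chain_on le C \<and> \<rho> ` C = S}"
  define g where "g D = {x\<in>L. \<exists>A. Some A \<in> D \<and> is_lub L le (\<psi> ` A) x}" for D
  have "LC \<subseteq> g ` BC"
  proof
    fix C assume "C \<in> LC"
    then have C: "C \<subseteq> L" "chain_on le C" "\<rho> ` C = S" unfolding LC_def by auto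
    have finC: "finite C" using C(1) finL finite_subset by blast
    obtain F where F: "\<forall>x\<in>C. F x \<subseteq> atoms_of L le \<and> finite (F x) \<and> card (F x) = \<rho> x \<and> is_lub L le (F x) x"
      "\<forall>x\<in>C. \<forall>y\<in>C. le x y \<longrightarrow> F x \<subseteq> F y" using family[OF finC C(1,2)] by blast
    define D where "D = (\<lambda>x. Some (\<phi> ` F x)) ` C"
    have psiphi: "\<psi> ` \<phi> ` F x = F x" if "x \<in> C" for x
      unfolding \<psi>_def using F that injphi by auto
    have cardphi: "card (\<phi> ` F x) = \<rho> x" if "x \<in> C" for x
      using F that card_image[OF inj_on_subset[OF injphi]] by auto
    have Sr: "\<rho> x \<le> r" if "x \<in> C" for x using C(3) assms(4) that by auto
    have "D \<subseteq> trunc_bool_carrier r n"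
    proof
      fix d assume "d \<in> D"
      then obtain x where x: "x \<in> C" "d = Some (\<phi> ` F x)" unfolding D_def by auto
      have "F x \<subseteq> atoms_of L le" using F x by auto
      then have "\<phi> ` F x \<subseteq> {1..n}" using imphi by (metis image_mono)
      then show "d \<in> trunc_bool_carrier r n" unfolding trunc_bool_carrier_def
        using x cardphi[OF x(1)] Sr[OF x(1)] by auto
    qed
    moreover have "chain_on trunc_bool_le D"
      unfolding chain_on_def
    proof (intro ballI)
      fix d e assume "d \<in> D" "e \<in> D"
      then obtain x y where "x \<in> C" "d = Some (\<phi> ` F x)" "y \<in> C" "e = Some (\<phi> ` F y)"
        unfolding D_def by auto
      moreover have "le x y \<or> le y x" using C(2) \<open>x \<in> C\<close> \<open>y \<in> C\<close> unfolding chain_on_def by auto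
      ultimately show "trunc_bool_le d e \<or> trunc_bool_le e d"
      proof (elim conjE disjE)
        assume "x \<in> C" "d = Some (\<phi> ` F x)" "y \<in> C" "e = Some (\<phi> ` F y)" "le x y"
        then have "F x \<subseteq> F y" using F(2) by blast
        then show ?thesis using \<open>d = _\<close> \<open>e = _\<close> by (simp add: image_mono)
      next
        assume "x \<in> C" "d = Some (\<phi> ` F x)" "y \<in> C" "e = Some (\<phi> ` F y)" "le y x"
        then have "F y \<subseteq> F x" using F(2) by blast
        then show ?thesis using \<open>d = _\<close> \<open>e = _\<close> by (simp add: image_mono)
      qed
    qed
    moreover have "trunc_bool_rank r ` D = S"
    proof -
      have "trunc_bool_rank r ` D = (\<lambda>x. card (\<phi> ` F x)) ` C" unfolding D_def image_image by simp
      also have "\<dots> = \<rho> ` C" using cardphi by (rule image_cong[OF HOL.refl])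
      finally show ?thesis using C(3) by simp
    qed
    ultimately have "D \<in> BC" unfolding BC_def by blast
    moreover have "g D = C"
    proof
      show "g D \<subseteq> C"
      proof
        fix x assume "x \<in> g D"
        then obtain A where A: "x \<in> L" "Some A \<in> D" "is_lub L le (\<psi> ` A) x" unfolding g_def by auto
        then obtain y where y: "y \<in> C" "A = \<phi> ` F y" unfolding D_def by auto
        then have "is_lub L le (F y) x" using A psiphi by simp
        then have "x = y" using F y lub_unique by blast
        then show "x \<in> C" using y by simp
      qed
    next
      show "C \<subseteq> g D"
      proof
        fix x assume x: "x \<in> C"
        then have "Some (\<phi> ` F x) \<in> D" "is_lub L le (\<psi> ` \<phi> ` F x) x" "x \<in> L"
          unfolding D_def using psiphi F C(1) by auto
        then show "x \<in> g D" unfolding g_def by blast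
      qed
    qed
    ultimately show "C \<in> g ` BC" by blast
  qed
  moreover have "finite BC"
  proof -
    have "BC \<subseteq> Pow (trunc_bool_carrier r n)" unfolding BC_def by auto
    then show ?thesis using trunc_carrier_finite finite_subset by blast
  qed
  ultimately have "card LC \<le> card BC"
    using card_mono[of "g ` BC" LC] card_image_le[of BC g] by auto
  then show ?thesis unfolding flag_f_def LC_def BC_def .
qed

end
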